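(* Let $R$ be a commutative ring with $1$ such that every maximal ideal of $R$ is quasi-pure. Then $R$ is zero-dimensional, i.e. every prime ideal of $R$ is maximal.
   Context: An ideal $I$ of a commutative ring $R$ is called quasi-pure if for each $f\in I$ there exists an integer $n\ge 1$ such that $\operatorname{Ann}(f^n)+I=R$ (equivalently, for each $f\in I$ there is $g\in I$ with $f(1-g)$ nilpotent). *)

theory Defs
  imports "HOL-Algebra.Algebra"
begin

definition ann :: "('a, 'b) ring_scheme \<Rightarrow> 'a \<Rightarrow> 'a set" where
  "ann R f = {x \<in> carrier R. x \<otimes>\<^bsub>R\<^esub> f = \<zero>\<^bsub>R\<^esub>}"

definition quasi_pure :: "('a, 'b) ring_scheme \<Rightarrow> 'a set \<Rightarrow> bool" where
  "quasi_pure R I \<longleftrightarrow> ideal I R \<and>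
     (\<forall>f\<in>I. \<exists>n::nat. n \<ge> 1 \<and> ann R (f [^]\<^bsub>R\<^esub> n) <+>\<^bsub>R\<^esub> I = carrier R)"

end

theory Submission
  imports Defs
begin

lemma chain_union_ideal:
  fixes R (structure)
  assumes "cring R" "C \<noteq> {}" "subset.chain {J. ideal J R \<and> I \<subseteq> J \<and> \<one> \<notin> J} C"
  shows "\<Union>C \<in> {J. ideal J R \<and> I \<subseteq> J \<and> \<one> \<notin> J}"
proof -
  interpret cring R by fact
  have mem: "\<And>J. J \<in> C \<Longrightarrow> ideal J R \<and> I \<subseteq> J \<and> \<one> \<notin> J"
    using assms(3) unfolding pred_on.chain_def by auto
  have cmp: "\<And>J K. J \<in> C \<Longrightarrow> K \<in> C \<Longrightarrow> J \<subseteq> K \<or> K \<subseteq> J"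
    using assms(3) unfolding pred_on.chain_def by auto
  obtain J0 where J0: "J0 \<in> C" using assms(2) by auto
  have "ideal (\<Union>C) R"
  proof (rule idealI)
    show "ring R" by (rule ring_axioms)
    show "subgroup (\<Union>C) (add_monoid R)"
    proof
      show "\<Union>C \<subseteq> carrier (add_monoid R)"
      proof
        fix x assume "x \<in> \<Union>C"
        then obtain J where J: "J \<in> C" "x \<in> J" by blast
        have "ideal J R" using mem J(1) by blast
        from ideal.Icarr[OF this J(2)] show "x \<in> carrier (add_monoid R)" by simp
      qed
      have J0I: "ideal J0 R" using mem J0 by blast
      from additive_subgroup.zero_closed[OF ideal.axioms(1)[OF J0I]] have "\<zero> \<in> J0" .
      then show "\<one>\<^bsub>add_monoid R\<^esub> \<in> \<Union>C"
        using J0 by simp blast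
      fix x y assume x: "x \<in> \<Union>C" and y: "y \<in> \<Union>C"
      then obtain J K where JK: "J \<in> C" "K \<in> C" "x \<in> J" "y \<in> K" by auto
      have "x \<oplus> y \<in> \<Union>C"
      proof (cases "J \<subseteq> K")
        case True
        have K: "ideal K R" using mem JK(2) by blast
        have "x \<in> K" using True JK(3) by blast
        from additive_subgroup.a_closed[OF ideal.axioms(1)[OF K] this JK(4)]
        have "x \<oplus> y \<in> K" .
        then show ?thesis using JK by blast
      next
        case False
        then have "K \<subseteq> J" using cmp JK by blast
        have K: "ideal J R" using mem JK(1) by blast
        have "y \<in> J" using \<open>K \<subseteq> J\<close> JK(4) by blast
        from additive_subgroup.a_closed[OF ideal.axioms(1)[OF K] JK(3) this]
        have "x \<oplus> y \<in> J" .
        then show ?thesis using JK by blast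
      qed
      then show "x \<otimes>\<^bsub>add_monoid R\<^esub> y \<in> \<Union>C" by simp
    next
      fix x assume "x \<in> \<Union>C"
      then obtain J where J: "J \<in> C" "x \<in> J" by auto
      have JI: "ideal J R" using mem J(1) by blast
      from additive_subgroup.a_inv_closed[OF ideal.axioms(1)[OF JI] J(2)]
      have "\<ominus> x \<in> J" .
      then show "inv\<^bsub>add_monoid R\<^esub> x \<in> \<Union>C"
        using J by (simp add: a_inv_def) blast
    qed
  next
    fix a x assume "a \<in> \<Union>C" "x \<in> carrier R"
    then obtain J where J: "J \<in> C" "a \<in> J" by auto
    have JI: "ideal J R" using mem J(1) by blast
    from ideal.I_l_closed[OF JI J(2) \<open>x \<in> carrier R\<close>] have "x \<otimes> a \<in> J" .
    then show "x \<otimes> a \<in> \<Union>C" using J by blast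
  next
    fix a x assume "a \<in> \<Union>C" "x \<in> carrier R"
    then obtain J where J: "J \<in> C" "a \<in> J" by auto
    have JI: "ideal J R" using mem J(1) by blast
    from ideal.I_r_closed[OF JI J(2) \<open>x \<in> carrier R\<close>] have "a \<otimes> x \<in> J" .
    then show "a \<otimes> x \<in> \<Union>C" using J by blast
  qed
  moreover have "I \<subseteq> \<Union>C" using J0 mem by blast
  moreover have "\<one> \<notin> \<Union>C" using mem by blast
  ultimately show ?thesis by blast
qed

lemma krull:
  fixes R (structure)
  assumes "cring R" "ideal I R" "\<one> \<notin> I"
  shows "\<exists>M. maximalideal M R \<and> I \<subseteq> M"
proof -
  interpret cring R by fact
  define A where "A = {J. ideal J R \<and> I \<subseteq> J \<and> \<one> \<notin> J}"
  have "\<exists>N\<in>A. \<forall>Y\<in>A. N \<subseteq> Y \<longrightarrow> Y = N"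
  proof (rule subset_Zorn_nonempty)
    show "A \<noteq> {}" using assms(2,3) unfolding A_def by blast
    fix C assume "C \<noteq> {}" "subset.chain A C"
    then show "\<Union>C \<in> A" using chain_union_ideal[OF assms(1), of C I] unfolding A_def by blast
  qed
  then obtain M where MA: "M \<in> A"
    and mx: "\<And>Y. Y \<in> A \<Longrightarrow> M \<subseteq> Y \<Longrightarrow> Y = M" by blast
  have M: "ideal M R" "I \<subseteq> M" "\<one> \<notin> M" using MA unfolding A_def by simp_all
  have "maximalideal M R"
  proof (rule maximalideal.intro[OF M(1)], rule maximalideal_axioms.intro)
    show "carrier R \<noteq> M" using M(3) one_closed by blast
    fix J assume J: "ideal J R" "M \<subseteq> J" "J \<subseteq> carrier R"
    show "J = M \<or> J = carrier R"
    proof (cases "\<one> \<in> J")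
      case True then show ?thesis using ideal.one_imp_carrier[OF J(1)] by blast
    next
      case False then show ?thesis using mx[of J] J M(2) unfolding A_def by blast
    qed
  qed
  then show ?thesis using M(2) by blast
qed

theorem lemma2p6:
  fixes R (structure)
  assumes "cring R"
    and "\<And>M. maximalideal M R \<Longrightarrow> quasi_pure R M"
  shows "\<forall>P. primeideal P R \<longrightarrow> maximalideal P R"
proof (intro allI impI)
  interpret cring R by fact
  fix P assume P: "primeideal P R"
  have Pi: "ideal P R" using P primeideal.axioms(1) by blast
  have one: "\<one> \<notin> P" using primeideal.I_notcarr[OF P] ideal.one_imp_carrier[OF Pi] by metis
  obtain M where M: "maximalideal M R" "P \<subseteq> M" using krull[OF assms(1) Pi one] by blast
  have Mi: "ideal M R" using M(1) maximalideal.axioms(1) by blast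
  have "M \<subseteq> P"
  proof
    fix f assume f: "f \<in> M"
    have fc: "f \<in> carrier R" using f ideal.Icarr[OF Mi] by blast
    show "f \<in> P"
    proof (rule ccontr)
      assume fP: "f \<notin> P"
      obtain n :: nat where "ann R (f [^] n) <+> M = carrier R"
        using assms(2)[OF M(1)] f unfolding quasi_pure_def by blast
      then have "\<one> \<in> ann R (f [^] n) <+> M" by simp
      then obtain a m where am: "a \<in> ann R (f [^] n)" "m \<in> M" "\<one> = a \<oplus> m"
        unfolding set_add_def' by blast
      have ac: "a \<in> carrier R" and a0: "a \<otimes> f [^] n = \<zero>" using am(1) unfolding ann_def by auto
      have fnP: "f [^] n \<notin> P"
      proof (induction n)
        case 0 then show ?case using one by simp
      next
        case (Suc k)
        have "f [^] Suc k = f [^] k \<otimes> f" using fc by simp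
        then show ?case using Suc primeideal.I_prime[OF P, of "f [^] k" f] fc fP by auto
      qed
      have "a \<otimes> f [^] n \<in> P" using a0 additive_subgroup.zero_closed[OF ideal.axioms(1)[OF Pi]] by simp
      then have "a \<in> P" using primeideal.I_prime[OF P, of a "f [^] n"] ac fc fnP by auto
      then have "a \<in> M" using M(2) by blast
      then have "a \<oplus> m \<in> M" using am(2) additive_subgroup.a_closed[OF ideal.axioms(1)[OF Mi]] by blast
      then have "\<one> \<in> M" using am(3) by simp
      then show False using maximalideal.I_notcarr[OF M(1)] ideal.one_imp_carrier[OF Mi] by metis
    qed
  qed
  then have "M = P" using M(2) by blast
  then show "maximalideal P R" using M(1) by simp
qed

end
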